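(* Let $n\ge 1$ and let $\Lambda$ be a noncrossing set partition of $[n]=\{1,\dots,n\}$ with $k$ blocks. Then $\Lambda^+$ is a noncrossing set partition of $[n]$ with $n+1-k$ blocks.
   Context: A set partition is a set of nonempty, pairwise disjoint finite sets of integers (its blocks); it is a partition of $\mathcal X$ if the union of its blocks is $\mathcal X$. A pair $(i,j)$ is an arc of a set partition $\Lambda$ if $i<j$, $i$ and $j$ lie in the same block, and $j$ is the least element of that block greater than $i$; $\mathrm{Arc}(\Lambda)$ denotes the set of arcs (a partition is determined by its ground set and its arcs). $\Lambda$ is noncrossing if there are no two arcs $(i,k),(j,l)\in\mathrm{Arc}(\Lambda)$ with $i<j<k<l$. For a finite set $\mathcal X\subset\mathbb Z$ and a partition $\Lambda$ of $\mathcal X$, $\Lambda^+$ is the partition of $\mathcal X$ with arc set $(\mathrm{Arc}(\Lambda)\setminus\mathcal S)\cup\mathcal T$, where $\mathcal S=\{(i,i+1):i\in\mathbb Z\}$ and $\mathcal T$ is the set of pairs $(i,i+1)\in\mathcal X\times\mathcal X$ such that $i$ is the maximal element of its block of $\Lambda$ and $i+1$ is the minimal element of its block of $\Lambda$. *)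

theory Defs
  imports "HOL-Library.Disjoint_Sets"
begin

definition set_partition :: "int set set \<Rightarrow> bool" where
  "set_partition P \<longleftrightarrow> (\<forall>B\<in>P. B \<noteq> {} \<and> finite B) \<and> disjoint P"

definition partition_of :: "int set set \<Rightarrow> int set \<Rightarrow> bool" where
  "partition_of P X \<longleftrightarrow> set_partition P \<and> \<Union>P = X"

definition arcs :: "int set set \<Rightarrow> (int \<times> int) set" where
  "arcs P = {(i, j). i < j \<and> (\<exists>B\<in>P. i \<in> B \<and> j \<in> B \<and> (\<forall>x\<in>B. i < x \<longrightarrow> j \<le> x))}"

definition noncrossing :: "int set set \<Rightarrow> bool" where
  "noncrossing P \<longleftrightarrow>
     \<not> (\<exists>i j k l. (i, k) \<in> arcs P \<and> (j, l) \<in> arcs P \<and> i < j \<and> j < k \<and> k < l)"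

definition short_pairs :: "(int \<times> int) set" where
  "short_pairs = {(i, i + 1) | i. True}"

definition plus_pairs :: "int set \<Rightarrow> int set set \<Rightarrow> (int \<times> int) set" where
  "plus_pairs X P = {(i, i + 1) | i. i \<in> X \<and> i + 1 \<in> X \<and>
      (\<exists>B\<in>P. i \<in> B \<and> (\<forall>x\<in>B. x \<le> i)) \<and>
      (\<exists>B\<in>P. i + 1 \<in> B \<and> (\<forall>x\<in>B. i + 1 \<le> x))}"

definition plus_partition :: "int set \<Rightarrow> int set set \<Rightarrow> int set set" where
  "plus_partition X P = (THE Q. partition_of Q X \<and>
      arcs Q = (arcs P - short_pairs) \<union> plus_pairs X P)"

end

theory Submission
  imports Defs
begin

lemma sp_same:
  assumes "set_partition P" "B \<in> P" "B' \<in> P" "x \<in> B" "x \<in> B'"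
  shows "B = B'"
  using assms unfolding set_partition_def by (meson disjointD disjoint_iff)

lemma arcsD:
  assumes "(i,j) \<in> arcs P"
  shows "i < j \<and> (\<exists>B\<in>P. i \<in> B \<and> j \<in> B \<and> (\<forall>x\<in>B. i < x \<longrightarrow> j \<le> x))"
  using assms unfolding arcs_def by auto

lemma arcs_in_block:
  assumes "set_partition P" "(i,j) \<in> arcs P" "B \<in> P" "i \<in> B"
  shows "j \<in> B \<and> (\<forall>x\<in>B. i < x \<longrightarrow> j \<le> x)"
proof -
  obtain B' where "B' \<in> P" "i \<in> B'" "j \<in> B'" "\<forall>x\<in>B'. i < x \<longrightarrow> j \<le> x"
    using arcsD[OF assms(2)] by blast
  with sp_same[OF assms(1) assms(3) \<open>B' \<in> P\<close> assms(4)] show ?thesis by auto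
qed

lemma arcs_in_block2:
  assumes "set_partition P" "(i,j) \<in> arcs P" "B \<in> P" "j \<in> B"
  shows "i \<in> B"
proof -
  obtain B' where "B' \<in> P" "i \<in> B'" "j \<in> B'"
    using arcsD[OF assms(2)] by blast
  with sp_same[OF assms(1) assms(3) \<open>B' \<in> P\<close> assms(4)] show ?thesis by auto
qed

lemma arc_out_unique:
  assumes "set_partition P" "(i,j) \<in> arcs P" "(i,j') \<in> arcs P"
  shows "j = j'"
proof -
  obtain B where B: "B \<in> P" "i \<in> B" "j \<in> B" "\<forall>x\<in>B. i < x \<longrightarrow> j \<le> x" "i < j"
    using arcsD[OF assms(2)] by blast
  have "j' \<in> B" "\<forall>x\<in>B. i < x \<longrightarrow> j' \<le> x" "i < j'"
    using arcs_in_block[OF assms(1) assms(3) B(1,2)] arcsD[OF assms(3)] by auto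
  with B show ?thesis by force
qed

lemma arc_in_unique:
  assumes "set_partition P" "(i,j) \<in> arcs P" "(i',j) \<in> arcs P"
  shows "i = i'"
proof -
  obtain B where B: "B \<in> P" "i \<in> B" "j \<in> B" "\<forall>x\<in>B. i < x \<longrightarrow> j \<le> x" "i < j"
    using arcsD[OF assms(2)] by blast
  have "i' \<in> B" using arcs_in_block2[OF assms(1) assms(3) B(1,3)] .
  have B': "\<forall>x\<in>B. i' < x \<longrightarrow> j \<le> x" "i' < j"
    using arcs_in_block[OF assms(1) assms(3) B(1) \<open>i' \<in> B\<close>] arcsD[OF assms(3)] by auto
  show ?thesis
  proof (rule ccontr)
    assume "i \<noteq> i'"
    then consider "i < i'" | "i' < i" by linarith
    then show False
    proof cases
      case 1 then show False using B \<open>i' \<in> B\<close> B' by force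
    next
      case 2 then show False using B \<open>i' \<in> B\<close> B' by force
    qed
  qed
qed

lemma arc_exists_succ:
  assumes "set_partition P" "B \<in> P" "i \<in> B" "x \<in> B" "i < x"
  shows "\<exists>j. (i,j) \<in> arcs P \<and> j \<le> x"
proof -
  have fin: "finite B" using assms(1,2) unfolding set_partition_def by auto
  let ?S = "{y\<in>B. i < y}"
  have finS: "finite ?S" using fin by auto
  have neS: "?S \<noteq> {}" using assms by auto
  define j where "j = Min ?S"
  have "j \<in> ?S" unfolding j_def using Min_in[OF finS neS] .
  moreover have "\<forall>y\<in>B. i < y \<longrightarrow> j \<le> y" unfolding j_def using finS by auto
  ultimately have "(i,j) \<in> arcs P" unfolding arcs_def using assms(2,3) by auto
  moreover have "j \<le> x" unfolding j_def using finS assms by auto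
  ultimately show ?thesis by blast
qed

lemma arc_exists_pred:
  assumes "set_partition P" "B \<in> P" "y \<in> B" "x \<in> B" "x < y"
  shows "\<exists>h. (h,y) \<in> arcs P \<and> x \<le> h"
proof -
  have fin: "finite B" using assms(1,2) unfolding set_partition_def by auto
  let ?S = "{z\<in>B. z < y}"
  have finS: "finite ?S" using fin by auto
  have neS: "?S \<noteq> {}" using assms by auto
  define h where "h = Max ?S"
  have hS: "h \<in> ?S" unfolding h_def using Max_in[OF finS neS] .
  moreover have "\<forall>z\<in>B. z < y \<longrightarrow> z \<le> h" unfolding h_def using finS by auto
  ultimately have "\<forall>z\<in>B. h < z \<longrightarrow> y \<le> z" by force
  with hS have "(h,y) \<in> arcs P" unfolding arcs_def using assms(2,3) by auto
  moreover have "x \<le> h" unfolding h_def using finS assms by auto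
  ultimately show ?thesis by blast
qed

lemma arcs_subset:
  assumes "partition_of P X"
  shows "arcs P \<subseteq> X \<times> X"
  using assms unfolding partition_of_def arcs_def by auto

lemma same_block_chain:
  assumes "partition_of Q X" "partition_of Q' X" "arcs Q = arcs Q'"
    "B \<in> Q" "x \<in> B" "y \<in> B" "x \<le> y"
  shows "\<exists>B'\<in>Q'. x \<in> B' \<and> y \<in> B'"
  using assms(5-7)
proof (induction "nat (y - x)" arbitrary: x rule: less_induct)
  case less
  have spQ: "set_partition Q" and spQ': "set_partition Q'"
    using assms(1,2) unfolding partition_of_def by auto
  show ?case
  proof (cases "x = y")
    case True
    have "x \<in> X" using assms(1,4) less.prems unfolding partition_of_def by auto
    then show ?thesis using assms(2) True unfolding partition_of_def by auto
  next
    case False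
    then have "x < y" using less.prems by auto
    obtain j where j: "(x,j) \<in> arcs Q" "j \<le> y"
      using arc_exists_succ[OF spQ assms(4) less.prems(1,2) \<open>x < y\<close>] by blast
    have "x < j" using arcsD[OF j(1)] by auto
    have "j \<in> B" using arcs_in_block[OF spQ j(1) assms(4) less.prems(1)] by auto
    obtain B2 where B2: "B2 \<in> Q'" "j \<in> B2" "y \<in> B2"
      using less.hyps[of j] \<open>x < j\<close> j(2) \<open>j \<in> B\<close> less.prems by auto
    have "(x,j) \<in> arcs Q'" using j assms(3) by auto
    then obtain B1 where B1: "B1 \<in> Q'" "x \<in> B1" "j \<in> B1" using arcsD by blast
    have "B1 = B2" using sp_same[OF spQ' B1(1) B2(1) B1(3) B2(2)] .
    then show ?thesis using B1 B2 by auto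
  qed
qed

lemma same_block:
  assumes "partition_of Q X" "partition_of Q' X" "arcs Q = arcs Q'"
    "B \<in> Q" "x \<in> B" "y \<in> B"
  shows "\<exists>B'\<in>Q'. x \<in> B' \<and> y \<in> B'"
proof (cases "x \<le> y")
  case True then show ?thesis using same_block_chain[OF assms] by blast
next
  case False then show ?thesis using same_block_chain[OF assms(1-4,6,5)] by fastforce
qed

lemma partition_sub:
  assumes "partition_of Q X" "partition_of Q' X" "arcs Q = arcs Q'"
  shows "Q \<subseteq> Q'"
proof
  fix B assume B: "B \<in> Q"
  have spQ: "set_partition Q" and spQ': "set_partition Q'"
    using assms(1,2) unfolding partition_of_def by auto
  obtain x where x: "x \<in> B" using B spQ unfolding set_partition_def by auto
  obtain B' where B': "B' \<in> Q'" "x \<in> B'" using same_block[OF assms B x x] by auto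
  have "B = B'"
  proof
    show "B \<subseteq> B'"
    proof
      fix y assume "y \<in> B"
      then obtain C where "C \<in> Q'" "x \<in> C" "y \<in> C" using same_block[OF assms B x] by auto
      then show "y \<in> B'" using sp_same[OF spQ' B'(1) \<open>C \<in> Q'\<close> B'(2)] by auto
    qed
  next
    show "B' \<subseteq> B"
    proof
      fix y assume "y \<in> B'"
      then obtain C where "C \<in> Q" "x \<in> C" "y \<in> C"
        using same_block[OF assms(2,1) assms(3)[symmetric] B'(1,2)] by auto
      then show "y \<in> B" using sp_same[OF spQ B \<open>C \<in> Q\<close> x] by auto
    qed
  qed
  then show "B \<in> Q'" using B' by auto
qed

lemma partition_unique:
  assumes "partition_of Q X" "partition_of Q' X" "arcs Q = arcs Q'"
  shows "Q = Q'"
  using partition_sub[OF assms] partition_sub[OF assms(2,1) assms(3)[symmetric]] by auto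


lemma rtrancl_le:
  assumes "(x,y) \<in> R\<^sup>*" "\<forall>(i,j)\<in>R. i < (j::int)"
  shows "x \<le> y"
  using assms(1) by (induction rule: rtrancl_induct) (use assms(2) in fastforce)+

lemma rtrancl_step:
  assumes "(x,y) \<in> R\<^sup>*" "x \<noteq> y"
  obtains z where "(x,z) \<in> R" "(z,y) \<in> R\<^sup>*"
  using assms by (metis converse_rtranclE)

lemma arcs_exist:
  fixes R :: "(int \<times> int) set"
  assumes fin: "finite X" and sub: "R \<subseteq> X \<times> X" and lt: "\<forall>(i,j)\<in>R. i < j"
    and sv: "single_valued R" and svc: "single_valued (R\<inverse>)"
  shows "\<exists>Q. partition_of Q X \<and> arcs Q = R"
proof -
  define E where "E = {(x,y). x \<in> X \<and> y \<in> X \<and> ((x,y) \<in> R\<^sup>* \<or> (y,x) \<in> R\<^sup>*)}"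
  have conv: "(y,x) \<in> R\<^sup>* \<or> (x,y) \<in> R\<^sup>*" if "(x,z) \<in> R\<^sup>*" "(y,z) \<in> R\<^sup>*" for x y z
  proof -
    have "(z,x) \<in> (R\<inverse>)\<^sup>*" "(z,y) \<in> (R\<inverse>)\<^sup>*" using that by (auto simp: rtrancl_converse)
    from single_valued_confluent[OF svc this] show ?thesis by (auto simp: rtrancl_converse)
  qed
  have eq: "equiv X E"
    unfolding equiv_def refl_on_def sym_def trans_def
  proof (intro conjI allI impI)
    show "E \<subseteq> X \<times> X" unfolding E_def by auto
    show "\<forall>x\<in>X. (x,x) \<in> E" unfolding E_def by auto
    fix x y assume "(x,y) \<in> E" then show "(y,x) \<in> E" unfolding E_def by auto
  next
    fix x y z assume a: "(x,y) \<in> E" "(y,z) \<in> E"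
    then have "x \<in> X" "z \<in> X" unfolding E_def by auto
    moreover have "(x,z) \<in> R\<^sup>* \<or> (z,x) \<in> R\<^sup>*"
      using a unfolding E_def
      using single_valued_confluent[OF sv] conv by (blast intro: rtrancl_trans)
    ultimately show "(x,z) \<in> E" unfolding E_def by auto
  qed
  define Q where "Q = X // E"
  have pQ: "partition_of Q X"
    unfolding partition_of_def set_partition_def Q_def
  proof (intro conjI ballI)
    fix B assume "B \<in> X // E"
    then show "B \<noteq> {}" "finite B"
      using in_quotient_imp_non_empty[OF eq] in_quotient_imp_subset[OF eq] fin
      by (auto intro: finite_subset)
  next
    show "disjoint (X // E)" unfolding disjoint_def
      using quotient_disj[OF eq] by blast
    show "\<Union> (X // E) = X" using Union_quotient[OF eq] .
  qed
  have "arcs Q = R"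
  proof
    show "arcs Q \<subseteq> R"
    proof
      fix p assume "p \<in> arcs Q"
      then obtain i j where p: "p = (i,j)" "(i,j) \<in> arcs Q" by (cases p) auto
      obtain B where B: "B \<in> Q" "i \<in> B" "j \<in> B" "\<forall>x\<in>B. i < x \<longrightarrow> j \<le> x" "i < j"
        using arcsD[OF p(2)] by blast
      have ij: "(i,j) \<in> E" using in_quotient_imp_in_rel[OF eq] B unfolding Q_def by auto
      have "(i,j) \<in> R\<^sup>*"
        using ij B(5) rtrancl_le[of j i R] lt unfolding E_def by force
      then obtain z where z: "(i,z) \<in> R" "(z,j) \<in> R\<^sup>*" using B(5) rtrancl_step by force
      have "z \<le> j" using rtrancl_le[OF z(2) lt] .
      have "i < z" using z(1) lt by auto
      have "(i,z) \<in> E" using z(1) sub unfolding E_def by auto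
      then have "z \<in> B"
        using B(1,2) eq unfolding Q_def quotient_def
        by (auto dest: equiv_class_eq)
      then have "j \<le> z" using B(4) \<open>i < z\<close> by auto
      then show "p \<in> R" using z(1) p \<open>z \<le> j\<close> by auto
    qed
  next
    show "R \<subseteq> arcs Q"
    proof
      fix p assume "p \<in> R"
      then obtain i j where p: "p = (i,j)" "(i,j) \<in> R" by (cases p) auto
      have iX: "i \<in> X" "j \<in> X" using p sub by auto
      define B where "B = E `` {i}"
      have "B \<in> Q" unfolding B_def Q_def using iX by (auto intro: quotientI)
      have "i \<in> B" unfolding B_def E_def using iX by auto
      have "j \<in> B" unfolding B_def E_def using iX p by auto
      have "j \<le> x" if xa: "x \<in> B" "i < x" for x
      proof -
        have "(i,x) \<in> E" using xa unfolding B_def by auto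
        then have "(i,x) \<in> R\<^sup>*"
          using xa(2) rtrancl_le[of x i R] lt unfolding E_def by force
        then obtain z where z: "(i,z) \<in> R" "(z,x) \<in> R\<^sup>*" using xa(2) rtrancl_step by force
        have "z = j" using sv z(1) p(2) unfolding single_valued_def by blast
        then show ?thesis using rtrancl_le[OF z(2) lt] by auto
      qed
      then show "p \<in> arcs Q" unfolding arcs_def using p lt \<open>B \<in> Q\<close> \<open>i \<in> B\<close> \<open>j \<in> B\<close> by auto
    qed
  qed
  with pQ show ?thesis by blast
qed

lemma card_partition_arcs:
  assumes "partition_of P X" "finite X"
  shows "card X = card P + card (arcs P)"
proof -
  have sp: "set_partition P" using assms unfolding partition_of_def by auto
  have bl: "\<And>B. B \<in> P \<Longrightarrow> finite B \<and> B \<noteq> {}" using sp unfolding set_partition_def by auto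
  define M where "M = Max ` P"
  have MX: "M \<subseteq> X" unfolding M_def using assms(1) bl unfolding partition_of_def
    by (auto intro!: Max_in)
  have injM: "inj_on Max P"
  proof (rule inj_onI)
    fix B B' assume "B \<in> P" "B' \<in> P" "Max B = Max B'"
    then show "B = B'" using sp_same[OF sp, of B B' "Max B"] bl Max_in by metis
  qed
  have cM: "card M = card P" unfolding M_def using card_image[OF injM] .
  have injf: "inj_on fst (arcs P)"
  proof (rule inj_onI)
    fix p q assume "p \<in> arcs P" "q \<in> arcs P" "fst p = fst q"
    then show "p = q" using arc_out_unique[OF sp] by (cases p, cases q) auto
  qed
  have img: "fst ` arcs P = X - M"
  proof
    show "fst ` arcs P \<subseteq> X - M"
    proof
      fix i assume "i \<in> fst ` arcs P"
      then obtain j where ij: "(i,j) \<in> arcs P" by auto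
      then obtain B where B: "B \<in> P" "i \<in> B" "j \<in> B" "i < j" using arcsD by blast
      have "i \<in> X" using B assms(1) unfolding partition_of_def by auto
      moreover have "i \<notin> M"
      proof
        assume "i \<in> M"
        then obtain C where C: "C \<in> P" "i = Max C" unfolding M_def by auto
        then have "i \<in> C" using bl Max_in by metis
        then have "C = B" using sp_same[OF sp C(1) B(1)] B by auto
        then show False using C B bl[OF B(1)] by (metis Max_ge not_le)
      qed
      ultimately show "i \<in> X - M" by auto
    qed
  next
    show "X - M \<subseteq> fst ` arcs P"
    proof
      fix i assume i: "i \<in> X - M"
      then obtain B where B: "B \<in> P" "i \<in> B" using assms(1) unfolding partition_of_def by auto
      have "i \<noteq> Max B" using i B unfolding M_def by auto
      then have "i < Max B" using B bl Max_ge by fastforce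
      then obtain j where "(i,j) \<in> arcs P"
        using arc_exists_succ[OF sp B(1,2), of "Max B"] B bl Max_in by blast
      then show "i \<in> fst ` arcs P" by force
    qed
  qed
  have "card (arcs P) = card (X - M)" using card_image[OF injf] img by simp
  also have "\<dots> = card X - card M" using card_Diff_subset[OF finite_subset[OF MX assms(2)] MX] .
  finally show ?thesis using cM card_mono[OF assms(2) MX] by linarith
qed


lemma plus_pairsD:
  assumes "(a,b) \<in> plus_pairs X P"
  shows "b = a+1 \<and> a \<in> X \<and> a+1 \<in> X \<and> (\<exists>B\<in>P. a \<in> B \<and> (\<forall>x\<in>B. x \<le> a)) \<and>
      (\<exists>B\<in>P. a+1 \<in> B \<and> (\<forall>x\<in>B. a+1 \<le> x))"
  using assms unfolding plus_pairs_def by auto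

lemma short_pairs_iff: "(a,b) \<in> short_pairs \<longleftrightarrow> b = a + 1"
  unfolding short_pairs_def by auto

theorem proposition2p4:
  fixes n k :: nat and \<Lambda> :: "int set set"
  assumes "n \<ge> 1"
    and "partition_of \<Lambda> {1..int n}"
    and "noncrossing \<Lambda>"
    and "card \<Lambda> = k"
  shows "partition_of (plus_partition {1..int n} \<Lambda>) {1..int n}
    \<and> noncrossing (plus_partition {1..int n} \<Lambda>)
    \<and> card (plus_partition {1..int n} \<Lambda>) = n + 1 - k"
proof -
  define X where "X = {1..int n}"
  define A where "A = arcs \<Lambda>"
  define T where "T = plus_pairs X \<Lambda>"
  define A' where "A' = (A - short_pairs) \<union> T"
  have pL: "partition_of \<Lambda> X" using assms(2) unfolding X_def .
  have sp: "set_partition \<Lambda>" using pL unfolding partition_of_def by auto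
  have finX: "finite X" unfolding X_def by auto
  have cX: "card X = n" unfolding X_def by auto
  have AX: "A \<subseteq> X \<times> X" unfolding A_def using arcs_subset[OF pL] .
  have nc: "\<not> ((i,k') \<in> A \<and> (j,l) \<in> A \<and> i < j \<and> j < k' \<and> k' < l)" for i j k' l
    using assms(3) unfolding noncrossing_def A_def by blast
  have maxno: "False" if "(i,j) \<in> A" "B \<in> \<Lambda>" "i \<in> B" "\<forall>x\<in>B. x \<le> i" for i j B
    using arcs_in_block[OF sp that(1)[unfolded A_def] that(2,3)] arcsD[OF that(1)[unfolded A_def]] that(4)
    by force
  have minno: "False" if "(h,j) \<in> A" "B \<in> \<Lambda>" "j \<in> B" "\<forall>x\<in>B. j \<le> x" for h j B
    using arcs_in_block2[OF sp that(1)[unfolded A_def] that(2,3)] arcsD[OF that(1)[unfolded A_def]] that(4)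
    by force
  have A'X: "A' \<subseteq> X \<times> X" unfolding A'_def T_def using AX plus_pairsD by fastforce
  have A'lt: "\<forall>(i,j)\<in>A'. i < j" unfolding A'_def T_def A_def using arcsD plus_pairsD by fastforce
  have sv: "single_valued A'"
  proof (rule single_valuedI)
    fix i j j' assume a: "(i,j) \<in> A'" "(i,j') \<in> A'"
    show "j = j'"
    proof (cases "(i,j) \<in> T")
      case True
      then show ?thesis using a maxno plus_pairsD[of i _ X \<Lambda>] unfolding A'_def T_def by blast
    next
      case False
      then have "(i,j) \<in> A" using a unfolding A'_def by auto
      moreover have "(i,j') \<in> A"
        using a(2) maxno[OF \<open>(i,j) \<in> A\<close>] plus_pairsD[of i j' X \<Lambda>] unfolding A'_def T_def by auto
      ultimately show ?thesis using arc_out_unique[OF sp] unfolding A_def by blast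
    qed
  qed
  have svc: "single_valued (A'\<inverse>)"
  proof (rule single_valuedI)
    fix j i i' assume a: "(j,i) \<in> A'\<inverse>" "(j,i') \<in> A'\<inverse>"
    then have a: "(i,j) \<in> A'" "(i',j) \<in> A'" by auto
    show "i = i'"
    proof (cases "(i,j) \<in> T")
      case True
      then have "j = i + 1" using plus_pairsD unfolding T_def by blast
      then show ?thesis using True a minno plus_pairsD[of i _ X \<Lambda>] plus_pairsD[of i' _ X \<Lambda>]
        unfolding A'_def T_def by (metis DiffD1 UnE add_right_cancel)
    next
      case False
      then have "(i,j) \<in> A" using a unfolding A'_def by auto
      moreover have "(i',j) \<in> A"
      proof (rule ccontr)
        assume "(i',j) \<notin> A"
        then have "(i',j) \<in> T" using a unfolding A'_def by auto
        then show False using minno[OF \<open>(i,j) \<in> A\<close>] plus_pairsD[of i' j X \<Lambda>] unfolding T_def by auto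
      qed
      ultimately show ?thesis using arc_in_unique[OF sp] unfolding A_def by blast
    qed
  qed
  obtain Q where Q: "partition_of Q X" "arcs Q = A'"
    using arcs_exist[OF finX A'X A'lt sv svc] by blast
  have PQ: "plus_partition X \<Lambda> = Q"
    unfolding plus_partition_def
  proof (rule the_equality)
    show "partition_of Q X \<and> arcs Q = arcs \<Lambda> - short_pairs \<union> plus_pairs X \<Lambda>"
      using Q unfolding A'_def A_def T_def by auto
  next
    fix Q' assume "partition_of Q' X \<and> arcs Q' = arcs \<Lambda> - short_pairs \<union> plus_pairs X \<Lambda>"
    then show "Q' = Q" using partition_unique[of Q' X Q] Q unfolding A'_def A_def T_def by auto
  qed
  have ncQ: "noncrossing Q"
    unfolding noncrossing_def Q(2)
  proof
    assume "\<exists>i j k' l. (i, k') \<in> A' \<and> (j, l) \<in> A' \<and> i < j \<and> j < k' \<and> k' < l"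
    then obtain i j k' l where c: "(i, k') \<in> A'" "(j, l) \<in> A'" "i < j" "j < k'" "k' < l" by blast
    have "(i,k') \<in> A"
      using c plus_pairsD[of i k' X \<Lambda>] unfolding A'_def T_def by auto
    moreover have "(j,l) \<in> A"
      using c plus_pairsD[of j l X \<Lambda>] unfolding A'_def T_def by auto
    ultimately show False using nc c by blast
  qed
  define G where "G = {1..int n - 1}"
  define G1 where "G1 = {i. (i,i+1) \<in> A}"
  define G2 where "G2 = {i. (i,i+1) \<in> T}"
  define G3 where "G3 = {i. \<exists>j. (i,j) \<in> A \<and> i+1 < j}"
  define G4 where "G4 = {i. \<exists>h. (h,i+1) \<in> A \<and> h < i}"
  have cG: "card G = n - 1" unfolding G_def by auto
  have finA: "finite A" using AX finX by (meson finite_SigmaI finite_subset)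
  have finT: "finite T" using A'X finX unfolding A'_def by (meson finite_SigmaI finite_subset le_sup_iff)
  have Xi: "i \<in> X \<longleftrightarrow> 1 \<le> i \<and> i \<le> int n" for i unfolding X_def by auto
  have GU: "G = G1 \<union> G2 \<union> G3 \<union> G4"
  proof
    show "G1 \<union> G2 \<union> G3 \<union> G4 \<subseteq> G"
    proof
      fix i assume "i \<in> G1 \<union> G2 \<union> G3 \<union> G4"
      then consider "(i,i+1) \<in> A" | "(i,i+1) \<in> T" | j where "(i,j) \<in> A" "i+1<j"
        | h where "(h,i+1) \<in> A" "h < i"
        unfolding G1_def G2_def G3_def G4_def by blast
      then show "i \<in> G"
      proof cases
        case 1 then show ?thesis using AX Xi unfolding G_def by fastforce
      next
        case 2 then show ?thesis using plus_pairsD[of i "i+1" X \<Lambda>] Xi unfolding G_def T_def by auto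
      next
        case 3 then show ?thesis using AX Xi unfolding G_def by fastforce
      next
        case 4 then show ?thesis using AX Xi unfolding G_def by fastforce
      qed
    qed
  next
    show "G \<subseteq> G1 \<union> G2 \<union> G3 \<union> G4"
    proof
      fix i assume iG: "i \<in> G"
      then have iX: "i \<in> X" "i+1 \<in> X" unfolding G_def X_def by auto
      obtain B where B: "B \<in> \<Lambda>" "i \<in> B" using iX pL unfolding partition_of_def by auto
      obtain B' where B': "B' \<in> \<Lambda>" "i+1 \<in> B'" using iX pL unfolding partition_of_def by auto
      show "i \<in> G1 \<union> G2 \<union> G3 \<union> G4"
      proof (cases "\<exists>x\<in>B. i < x")
        case True
        then obtain x where "x \<in> B" "i < x" by auto
        then obtain j where j: "(i,j) \<in> A" using arc_exists_succ[OF sp B] unfolding A_def by blast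
        then have "i < j" using arcsD unfolding A_def by blast
        then show ?thesis using j unfolding G1_def G3_def
          by (cases "j = i+1") auto
      next
        case False
        then have mx: "\<forall>x\<in>B. x \<le> i" by auto
        show ?thesis
        proof (cases "\<exists>x\<in>B'. x < i+1")
          case True
          then obtain x where "x \<in> B'" "x < i+1" by auto
          then obtain h where h: "(h,i+1) \<in> A" using arc_exists_pred[OF sp B'] unfolding A_def by blast
          then have "h < i+1" using arcsD unfolding A_def by blast
          then show ?thesis using h unfolding G1_def G4_def
            by (cases "h = i") auto
        next
          case False
          then have "\<forall>x\<in>B'. i+1 \<le> x" by auto
          then have "(i,i+1) \<in> T" unfolding T_def plus_pairs_def using iX B B' mx by blast
          then show ?thesis unfolding G2_def by auto
        qed
      qed
    qed
  qed
  have d12: "G1 \<inter> G2 = {}"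
  proof -
    { fix i assume "(i,i+1) \<in> A" "(i,i+1) \<in> T"
      then have False using maxno plus_pairsD unfolding T_def by blast }
    then show ?thesis unfolding G1_def G2_def by auto
  qed
  have d13: "G1 \<inter> G3 = {}"
  proof -
    { fix i j assume "(i,i+1) \<in> A" "(i,j) \<in> A" "i+1 < j"
      then have False using arc_out_unique[OF sp] unfolding A_def by fastforce }
    then show ?thesis unfolding G1_def G3_def by auto
  qed
  have d14: "G1 \<inter> G4 = {}"
  proof -
    { fix i h assume "(i,i+1) \<in> A" "(h,i+1) \<in> A" "h < i"
      then have False using arc_in_unique[OF sp] unfolding A_def by fastforce }
    then show ?thesis unfolding G1_def G4_def by auto
  qed
  have d23: "G2 \<inter> G3 = {}"
  proof -
    { fix i j assume "(i,i+1) \<in> T" "(i,j) \<in> A"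
      then have False using maxno plus_pairsD unfolding T_def by blast }
    then show ?thesis unfolding G2_def G3_def by auto
  qed
  have d24: "G2 \<inter> G4 = {}"
  proof -
    { fix i h assume "(i,i+1) \<in> T" "(h,i+1) \<in> A"
      then have False using minno plus_pairsD unfolding T_def by blast }
    then show ?thesis unfolding G2_def G4_def by auto
  qed
  have d34: "G3 \<inter> G4 = {}"
  proof -
    { fix i j h assume "(i,j) \<in> A" "i+1 < j" "(h,i+1) \<in> A" "h < i"
      then have False using nc by (meson less_add_one) }
    then show ?thesis unfolding G3_def G4_def by auto
  qed
  have finG: "finite G" unfolding G_def by auto
  have fins: "finite G1" "finite G2" "finite G3" "finite G4" using finG GU by (metis finite_Un)+
  have cGs: "card G = card G1 + card G2 + card G3 + card G4"
    using GU fins d12 d13 d14 d23 d24 d34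
    by (simp add: card_Un_disjoint Int_Un_distrib Int_Un_distrib2)
  have injsh: "inj (\<lambda>i::int. (i,i+1))" by (auto intro: injI)
  have c1: "card G1 = card (A \<inter> short_pairs)"
  proof -
    have "A \<inter> short_pairs = (\<lambda>i. (i,i+1)) ` G1" unfolding G1_def short_pairs_def by auto
    then show ?thesis using card_image[OF inj_on_subset[OF injsh]] by auto
  qed
  have TS: "T \<subseteq> short_pairs" unfolding T_def short_pairs_def plus_pairs_def by auto
  have c2: "card G2 = card T"
  proof -
    have "T = (\<lambda>i. (i,i+1)) ` G2" unfolding G2_def using TS unfolding short_pairs_def by auto
    then show ?thesis using card_image[OF inj_on_subset[OF injsh]] by auto
  qed
  have Alt: "\<And>i j. (i,j) \<in> A \<Longrightarrow> i < j" using arcsD unfolding A_def by blast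
  have c3: "card G3 = card (A - short_pairs)"
  proof -
    have inj: "inj_on fst (A - short_pairs)"
      by (rule inj_onI) (use arc_out_unique[OF sp] in \<open>auto simp: A_def\<close>)
    have "fst ` (A - short_pairs) = G3"
    proof
      show "fst ` (A - short_pairs) \<subseteq> G3"
        using Alt unfolding G3_def short_pairs_def by fastforce
      show "G3 \<subseteq> fst ` (A - short_pairs)"
      proof
        fix i assume "i \<in> G3"
        then obtain j where "(i,j) \<in> A" "i+1 < j" unfolding G3_def by auto
        then have "(i,j) \<in> A - short_pairs" unfolding short_pairs_def by auto
        then show "i \<in> fst ` (A - short_pairs)" by force
      qed
    qed
    then show ?thesis using card_image[OF inj] by auto
  qed
  have c4: "card G4 = card (A - short_pairs)"
  proof -
    let ?f = "\<lambda>p::int\<times>int. snd p - 1"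
    have inj: "inj_on ?f (A - short_pairs)"
    proof (rule inj_onI)
      fix p q assume "p \<in> A - short_pairs" "q \<in> A - short_pairs" "?f p = ?f q"
      then show "p = q" using arc_in_unique[OF sp] unfolding A_def
        by (cases p, cases q) auto
    qed
    have "?f ` (A - short_pairs) = G4"
    proof
      show "?f ` (A - short_pairs) \<subseteq> G4"
      proof
        fix x assume "x \<in> ?f ` (A - short_pairs)"
        then obtain h j where "(h,j) \<in> A - short_pairs" "x = j - 1" by force
        then have "(h,j) \<in> A" "j \<noteq> h+1" "x = j - 1" by (auto simp: short_pairs_iff)
        then show "x \<in> G4" unfolding G4_def using Alt[of h j] by (intro CollectI exI[of _ h]) auto
      qed
      show "G4 \<subseteq> ?f ` (A - short_pairs)"
      proof
        fix i assume "i \<in> G4"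
        then obtain h where "(h,i+1) \<in> A" "h < i" unfolding G4_def by auto
        then have "(h,i+1) \<in> A - short_pairs" unfolding short_pairs_def by auto
        then show "i \<in> ?f ` (A - short_pairs)" by force
      qed
    qed
    then show ?thesis using card_image[OF inj] by auto
  qed
  have cA: "card A = card (A \<inter> short_pairs) + card (A - short_pairs)"
    using card_Un_disjoint[of "A \<inter> short_pairs" "A - short_pairs"] finA
    by (metis Int_Diff_Un Int_Diff_disjoint finite_Diff finite_Int)
  have cA': "card A' = card (A - short_pairs) + card T"
    unfolding A'_def using card_Un_disjoint[of "A - short_pairs" T] finA finT TS by auto
  have sumc: "card A + card A' = n - 1" using cA cA' c1 c2 c3 c4 cGs cG by linarith
  have cL: "n = k + card A" using card_partition_arcs[OF pL finX] cX assms(4) unfolding A_def by simp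
  have cQ: "n = card Q + card A'" using card_partition_arcs[OF Q(1) finX] cX Q(2) by simp
  have "card Q = n + 1 - k" using sumc cL cQ assms(1) by linarith
  then show ?thesis using Q(1) ncQ PQ unfolding X_def by simp
qed

end
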